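(* Let $\mathcal{A}'$ be an alphabet with $d\ge2$ letters and $\pi'$ an irreducible permutation on $\mathcal{A}'$, with $A$ the first letter of the top row and $E$ the first letter of the bottom row. Let $B\notin\mathcal{A}'$, $\mathcal{A}=\mathcal{A}'\cup\{B\}$, and let $C,D\in\mathcal{A}'$ with $(C,D)\ne(A,E)$ ($C=D$ allowed). Let $\pi$ be the permutation on $\mathcal{A}$ obtained from $\pi'$ by inserting $B$ immediately before $C$ in the top row and immediately before $D$ in the bottom row. Then $\pi$ is irreducible.
   Context: A permutation on an alphabet $\mathcal{A}$ is a pair $(\pi_0,\pi_1)$ of bijections $\mathcal{A}\to\{1,\dots,\#\mathcal{A}\}$, viewed as a top row and a bottom row listing the letters in order; it is irreducible if there is no $1\le k<\#\mathcal{A}$ such that the sets of the first $k$ letters of the top row and of the bottom row coincide. *)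

theory Defs
  imports Main
begin

text \<open>A permutation on a finite alphabet Al is a pair (pi0, pi1) of bijections
  Al -> {1..card Al} (top row, bottom row).\<close>
definition is_perm :: "'a set \<Rightarrow> ('a \<Rightarrow> nat) \<times> ('a \<Rightarrow> nat) \<Rightarrow> bool" where
  "is_perm Al p \<longleftrightarrow> finite Al \<and> bij_betw (fst p) Al {1..card Al} \<and> bij_betw (snd p) Al {1..card Al}"

definition irreducible_perm :: "'a set \<Rightarrow> ('a \<Rightarrow> nat) \<times> ('a \<Rightarrow> nat) \<Rightarrow> bool" where
  "irreducible_perm Al p \<longleftrightarrow>
     \<not> (\<exists>k. 1 \<le> k \<and> k < card Al \<and> {x \<in> Al. fst p x \<le> k} = {x \<in> Al. snd p x \<le> k})"

definition insert_before :: "'a \<Rightarrow> 'a \<Rightarrow> ('a \<Rightarrow> nat) \<Rightarrow> ('a \<Rightarrow> nat)" where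
  "insert_before b c f = (\<lambda>x. if x = b then f c else if f x < f c then f x else f x + 1)"

end

theory Submission
  imports Defs
begin

theorem lemma5p4:
  fixes Al' :: "'a set" and p0 p1 :: "'a \<Rightarrow> nat" and a e b c d :: 'a
  assumes "finite Al'" and "card Al' \<ge> 2"
    and "is_perm Al' (p0, p1)" and "irreducible_perm Al' (p0, p1)"
    and "a \<in> Al'" and "p0 a = 1" and "e \<in> Al'" and "p1 e = 1"
    and "b \<notin> Al'" and "c \<in> Al'" and "d \<in> Al'" and "(c, d) \<noteq> (a, e)"
  shows "irreducible_perm (insert b Al') (insert_before b c p0, insert_before b d p1)"
proof -
  define n where "n = card Al'"
  have cardA: "card (insert b Al') = n + 1" using assms(1,9) n_def by simp
  have b0: "bij_betw p0 Al' {1..n}" and b1: "bij_betw p1 Al' {1..n}"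
    using assms(3) n_def by (auto simp: is_perm_def)
  have r0: "\<And>x. x \<in> Al' \<Longrightarrow> p0 x \<in> {1..n}" using b0 by (auto simp: bij_betw_def)
  have r1: "\<And>x. x \<in> Al' \<Longrightarrow> p1 x \<in> {1..n}" using b1 by (auto simp: bij_betw_def)
  have i0: "inj_on p0 Al'" and i1: "inj_on p1 Al'" using b0 b1 by (auto simp: bij_betw_def)
  have irr: "\<And>k. 1 \<le> k \<Longrightarrow> k < n \<Longrightarrow> {x \<in> Al'. p0 x \<le> k} \<noteq> {x \<in> Al'. p1 x \<le> k}"
    using assms(4) n_def by (auto simp: irreducible_perm_def)
  show ?thesis unfolding irreducible_perm_def
  proof (rule notI, elim exE conjE)
    fix k assume k1: "1 \<le> k" and kn: "k < card (insert b Al')"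
      and eq: "{x \<in> insert b Al'. fst (insert_before b c p0, insert_before b d p1) x \<le> k} =
               {x \<in> insert b Al'. snd (insert_before b c p0, insert_before b d p1) x \<le> k}"
    have eq': "\<And>x. x \<in> insert b Al' \<Longrightarrow> (insert_before b c p0 x \<le> k) = (insert_before b d p1 x \<le> k)"
      using eq by (simp add: set_eq_iff) blast
    have bn: "b \<noteq> x" if "x \<in> Al'" for x using that assms(9) by auto
    show False
    proof (cases "p0 c \<le> k")
      case True
      then have "p1 d \<le> k" using eq'[of b] by (simp add: insert_before_def)
      have "\<And>x. x \<in> Al' \<Longrightarrow> (p0 x \<le> k - 1) = (p1 x \<le> k - 1)"
      proof -
        fix x assume x: "x \<in> Al'"
        have "(insert_before b c p0 x \<le> k) = (p0 x \<le> k - 1)"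
          using True bn[OF x] k1 by (auto simp: insert_before_def)
        moreover have "(insert_before b d p1 x \<le> k) = (p1 x \<le> k - 1)"
          using \<open>p1 d \<le> k\<close> bn[OF x] k1 by (auto simp: insert_before_def)
        ultimately show "(p0 x \<le> k - 1) = (p1 x \<le> k - 1)" using eq'[of x] x by simp
      qed
      hence E: "{x \<in> Al'. p0 x \<le> k - 1} = {x \<in> Al'. p1 x \<le> k - 1}" by auto
      show False
      proof (cases "k = 1")
        case True
        have "p0 c = 1" using \<open>p0 c \<le> k\<close> True r0[OF assms(10)] by auto
        hence "c = a" using i0 assms(5,6,10) by (metis inj_on_def)
        have "p1 d = 1" using \<open>p1 d \<le> k\<close> True r1[OF assms(11)] by auto
        hence "d = e" using i1 assms(7,8,11) by (metis inj_on_def)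
        thus False using \<open>c = a\<close> assms(12) by simp
      next
        case False
        thus False using irr[of "k - 1"] E k1 kn cardA by auto
      qed
    next
      case False
      then have "\<not> p1 d \<le> k" using eq'[of b] by (simp add: insert_before_def)
      have "\<And>x. x \<in> Al' \<Longrightarrow> (p0 x \<le> k) = (p1 x \<le> k)"
      proof -
        fix x assume x: "x \<in> Al'"
        have "(insert_before b c p0 x \<le> k) = (p0 x \<le> k)"
          using False bn[OF x] by (auto simp: insert_before_def)
        moreover have "(insert_before b d p1 x \<le> k) = (p1 x \<le> k)"
          using \<open>\<not> p1 d \<le> k\<close> bn[OF x] by (auto simp: insert_before_def)
        ultimately show "(p0 x \<le> k) = (p1 x \<le> k)" using eq'[of x] x by simp
      qed
      hence E: "{x \<in> Al'. p0 x \<le> k} = {x \<in> Al'. p1 x \<le> k}" by auto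
      have "k < n" using False r0[OF assms(10)] by auto
      thus False using irr[of k] E k1 by auto
    qed
  qed
qed

end
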